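(* Let $\sigma$ be a reasonable strategy of player $0$ in the escape arena $\mathcal{A}_\bot$ and $I_\sigma$ its set of improvements. Then every direct improvement $\sigma'$ of $\sigma$ satisfies $\sigma'\preceq I_\sigma$, i.e. $\mathcal{V}_{\sigma'}(s)\preceq\mathcal{V}_{I_\sigma}(s)$ for all vertices $s$.
   Context: Parity game arena: $\mathcal{A}=(V,E,o,c)$ with $V$ finite, $E\subseteq V\times V$, every vertex has a successor, owner map $o:V\to\{0,1\}$, colouring $c:V\to\{0,\dots,d-1\}$; $V_i=o^{-1}(i)$. An infinite vertex sequence is won by player $0$ (parity condition) iff the largest colour occurring infinitely often is even. A cycle $s_0\dots s_n$ ($s_{j+1}\in s_jE$, $s_0\in s_nE$) is $i$-dominated if its largest colour has parity $i$. Escape arena $\mathcal{A}_\bot$: vertices $V\cup\{\bot\}$, edges $E_\bot=E\cup(V_0\times\{\bot\})$, $\bot$ owned by player $0$ with no outgoing edges. Let $E_0=E_\bot\cap (V_0\times(V\cup\{\bot\}))$, $E_1=E\cap(V_1\times V)$. A strategy of player $i$ is a set $\sigma\subseteq E_i$ with $s\sigma\neq\emptyset$ for all $s\in V_i$. $\mathcal{A}_\bot|_{\sigma,\tau}$ is the graph with edge set $\sigma\cup\tau$, $\mathcal{A}_\bot|_\sigma$ the graph with edge set $\sigma\cup E_1$; a play is a maximal path (infinite or ending in $\bot$). Colour profiles: $\mathcal{P}=\mathbb{Z}^d\cup\{-\infty,\infty\}$, $\text{\o}$ the zero vector. $\wp(s)$ ($s\in V$) is the unit vector at coordinate $c(s)$;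 for a finite path $\wp$ is the sum over its vertices in $V$; for an infinite play $\wp=\infty$ if won by player $0$ under the parity condition, else $-\infty$. Addition componentwise, $x+\infty=\infty$, $x+(-\infty)=-\infty$. Total order $\prec$: $-\infty$ least, $\infty$ greatest; for distinct $p,p'\in\mathbb{Z}^d$ with $k$ the largest index where they differ, $p\prec p'$ iff ($k$ even and $p_k<p'_k$) or ($k$ odd and $p_k>p'_k$). Valuation of a player-$0$ strategy $\sigma$: $\mathcal{V}_\sigma(\bot)=\text{\o}$, and for $s\in V$, $\mathcal{V}_\sigma(s)=\min^{\prec}_{\tau}\max^{\prec}\{\wp(\pi)\mid\pi\text{ a play in }\mathcal{A}_\bot|_{\sigma,\tau}\text{ from }s\}$, min over player-$1$ strategies. $\sigma$ is reasonable if $\mathcal{A}_\bot|_\sigma$ has no $1$-dominated cycle. For strategies, $\sigma_a\preceq\sigma_b$ iff $\mathcal{V}_{\sigma_a}(s)\preceq\mathcal{V}_{\sigma_b}(s)$ for all $s$. For reasonable $\sigma$, $(s,t)\in E_0$ is an improvement if $\mathcal{V}_\sigma(s)\preceq\wp(s)+\mathcal{V}_\sigma(t)$; $I_\sigma$ is the set of all improvements. A direct improvement of $\sigma$ is a player-$0$ strategy $\sigma'\subseteq I_\sigma$. *)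

theory Defs
  imports Main
begin

text \<open>The escape arena uses the vertex type 'v option: Some v is the vertex v of V,
  None is the escape vertex bot.\<close>

definition arena :: "'v set \<Rightarrow> ('v \<times> 'v) set \<Rightarrow> 'v set \<Rightarrow> ('v \<Rightarrow> nat) \<Rightarrow> nat \<Rightarrow> bool" where
  "arena V E V0 c d \<longleftrightarrow> finite V \<and> E \<subseteq> V \<times> V \<and> (\<forall>v\<in>V. \<exists>w. (v, w) \<in> E)
     \<and> V0 \<subseteq> V \<and> (\<forall>v\<in>V. c v < d)"

definition Ebot :: "('v \<times> 'v) set \<Rightarrow> 'v set \<Rightarrow> ('v option \<times> 'v option) set" where
  "Ebot E V0 = {(Some u, Some v) | u v. (u, v) \<in> E} \<union> {(Some u, None) | u. u \<in> V0}"

definition E0 :: "('v \<times> 'v) set \<Rightarrow> 'v set \<Rightarrow> ('v option \<times> 'v option) set" where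
  "E0 E V0 = {(s, t) \<in> Ebot E V0. \<exists>u\<in>V0. s = Some u}"

definition E1 :: "'v set \<Rightarrow> ('v \<times> 'v) set \<Rightarrow> 'v set \<Rightarrow> ('v option \<times> 'v option) set" where
  "E1 V E V0 = {(Some u, Some v) | u v. (u, v) \<in> E \<and> u \<in> V - V0}"

definition strategy0 :: "('v \<times> 'v) set \<Rightarrow> 'v set \<Rightarrow> ('v option \<times> 'v option) set \<Rightarrow> bool" where
  "strategy0 E V0 \<sigma> \<longleftrightarrow> \<sigma> \<subseteq> E0 E V0 \<and> (\<forall>s\<in>V0. \<exists>t. (Some s, t) \<in> \<sigma>)"

definition strategy1 :: "'v set \<Rightarrow> ('v \<times> 'v) set \<Rightarrow> 'v set \<Rightarrow> ('v option \<times> 'v option) set \<Rightarrow> bool" where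
  "strategy1 V E V0 \<tau> \<longleftrightarrow> \<tau> \<subseteq> E1 V E V0 \<and> (\<forall>s\<in>V - V0. \<exists>t. (Some s, t) \<in> \<tau>)"

text \<open>Colour profiles: Z^d (as functions nat => int, only coordinates < d matter;
  all profiles arising are zero outside {0..<d}) together with -infinity and +infinity.\<close>
datatype prof = NInf | Fin "nat \<Rightarrow> int" | PInf

definition pzero :: prof where "pzero = Fin (\<lambda>_. 0)"

definition punit :: "nat \<Rightarrow> prof" where "punit k = Fin (\<lambda>i. if i = k then 1 else 0)"

fun padd :: "prof \<Rightarrow> prof \<Rightarrow> prof" where
  "padd (Fin a) (Fin b) = Fin (\<lambda>i. a i + b i)"
| "padd _ PInf = PInf"
| "padd _ NInf = NInf"
| "padd PInf _ = PInf"
| "padd NInf _ = NInf"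

fun prof_less :: "nat \<Rightarrow> prof \<Rightarrow> prof \<Rightarrow> bool" where
  "prof_less d NInf NInf = False"
| "prof_less d NInf _ = True"
| "prof_less d _ NInf = False"
| "prof_less d PInf _ = False"
| "prof_less d _ PInf = True"
| "prof_less d (Fin a) (Fin b) =
     (\<exists>k<d. (\<forall>i. k < i \<and> i < d \<longrightarrow> a i = b i) \<and>
            ((even k \<and> a k < b k) \<or> (odd k \<and> a k > b k)))"

definition prof_le :: "nat \<Rightarrow> prof \<Rightarrow> prof \<Rightarrow> bool" where
  "prof_le d p q \<longleftrightarrow> p = q \<or> prof_less d p q"

definition pmax :: "nat \<Rightarrow> prof set \<Rightarrow> prof" where
  "pmax d S = (THE x. x \<in> S \<and> (\<forall>y\<in>S. prof_le d y x))"

definition pmin :: "nat \<Rightarrow> prof set \<Rightarrow> prof" where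
  "pmin d S = (THE x. x \<in> S \<and> (\<forall>y\<in>S. prof_le d x y))"

definition path_prof :: "('v \<Rightarrow> nat) \<Rightarrow> 'v option list \<Rightarrow> prof" where
  "path_prof c xs = Fin (\<lambda>i. int (length (filter (\<lambda>x. x \<noteq> None \<and> c (the x) = i) xs)))"

definition inf_prof :: "('v \<Rightarrow> nat) \<Rightarrow> (nat \<Rightarrow> 'v option) \<Rightarrow> prof" where
  "inf_prof c \<pi> = (if even (Max {k. \<exists>\<^sub>\<infinity>n. c (the (\<pi> n)) = k}) then PInf else NInf)"

definition play_profs :: "('v \<Rightarrow> nat) \<Rightarrow> ('v option \<times> 'v option) set \<Rightarrow> 'v option \<Rightarrow> prof set" where
  "play_profs c F s =
     {path_prof c xs | xs. xs \<noteq> [] \<and> hd xs = s \<and>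
        (\<forall>i. Suc i < length xs \<longrightarrow> (xs ! i, xs ! Suc i) \<in> F) \<and> (\<nexists>t. (last xs, t) \<in> F)}
   \<union> {inf_prof c \<pi> | \<pi>. \<pi> 0 = s \<and> (\<forall>n. (\<pi> n, \<pi> (Suc n)) \<in> F)}"

definition val :: "'v set \<Rightarrow> ('v \<times> 'v) set \<Rightarrow> 'v set \<Rightarrow> ('v \<Rightarrow> nat) \<Rightarrow> nat \<Rightarrow>
    ('v option \<times> 'v option) set \<Rightarrow> 'v option \<Rightarrow> prof" where
  "val V E V0 c d \<sigma> s =
     (if s = None then pzero
      else pmin d {pmax d (play_profs c (\<sigma> \<union> \<tau>) s) | \<tau>. strategy1 V E V0 \<tau>})"

definition reasonable :: "'v set \<Rightarrow> ('v \<times> 'v) set \<Rightarrow> 'v set \<Rightarrow> ('v \<Rightarrow> nat) \<Rightarrow>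
    ('v option \<times> 'v option) set \<Rightarrow> bool" where
  "reasonable V E V0 c \<sigma> \<longleftrightarrow>
     \<not> (\<exists>xs. xs \<noteq> [] \<and>
          (\<forall>i<length xs. (xs ! i, xs ! ((Suc i) mod length xs)) \<in> \<sigma> \<union> E1 V E V0) \<and>
          odd (Max ((\<lambda>x. c (the x)) ` set xs)))"

definition improvements :: "'v set \<Rightarrow> ('v \<times> 'v) set \<Rightarrow> 'v set \<Rightarrow> ('v \<Rightarrow> nat) \<Rightarrow> nat \<Rightarrow>
    ('v option \<times> 'v option) set \<Rightarrow> ('v option \<times> 'v option) set" where
  "improvements V E V0 c d \<sigma> =
     {(s, t) \<in> E0 E V0. prof_le d (val V E V0 c d \<sigma> s)
                          (padd (punit (c (the s))) (val V E V0 c d \<sigma> t))}"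

end

theory Submission
  imports Defs "HOL-Library.Omega_Words_Fun"
begin


definition good :: "nat \<Rightarrow> prof \<Rightarrow> bool" where
  "good d p \<longleftrightarrow> (\<forall>a. p = Fin a \<longrightarrow> (\<forall>i\<ge>d. a i = 0))"

lemma prof_less_irrefl: "\<not> prof_less d p p"
  by (cases p) auto

lemma prof_less_trans: "prof_less d p q \<Longrightarrow> prof_less d q r \<Longrightarrow> prof_less d p r"
proof (cases p; cases q; cases r)
  fix a b e assume h: "prof_less d p q" "prof_less d q r" "p = Fin a" "q = Fin b" "r = Fin e"
  from h obtain k1 where k1: "k1 < d" "\<forall>i. k1 < i \<and> i < d \<longrightarrow> a i = b i"
    "(even k1 \<and> a k1 < b k1) \<or> (odd k1 \<and> a k1 > b k1)" by auto
  from h obtain k2 where k2: "k2 < d" "\<forall>i. k2 < i \<and> i < d \<longrightarrow> b i = e i"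
    "(even k2 \<and> b k2 < e k2) \<or> (odd k2 \<and> b k2 > e k2)" by auto
  show "prof_less d p r"
  proof (cases "k1 < k2")
    case True
    then show ?thesis using h k1 k2 by (auto intro!: exI[of _ k2]) 
  next
    case False
    show ?thesis
    proof (cases "k1 = k2")
      case True
      then show ?thesis using h k1 k2 by (auto intro!: exI[of _ k2]) 
    next
      case False
      then show ?thesis using h k1 k2 \<open>\<not> k1 < k2\<close> by (auto intro!: exI[of _ k1]) 
    qed
  qed
qed auto

lemma prof_le_refl: "prof_le d p p" by (simp add: prof_le_def)

lemma prof_le_trans: "prof_le d p q \<Longrightarrow> prof_le d q r \<Longrightarrow> prof_le d p r"
  unfolding prof_le_def using prof_less_trans by blast

lemma prof_le_antisym: "prof_le d p q \<Longrightarrow> prof_le d q p \<Longrightarrow> p = q"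
  unfolding prof_le_def using prof_less_trans prof_less_irrefl by blast

lemma prof_le_total:
  assumes "good d p" "good d q" shows "prof_le d p q \<or> prof_le d q p"
proof (cases p; cases q)
  fix a b assume pq: "p = Fin a" "q = Fin b"
  show ?thesis
  proof (cases "\<exists>i<d. a i \<noteq> b i")
    case False
    with assms pq have "a = b" unfolding good_def by (metis ext not_le)
    then show ?thesis using pq by (simp add: prof_le_def)
  next
    case True
    define K where "K = {i. i < d \<and> a i \<noteq> b i}"
    have fK: "finite K" "K \<noteq> {}" using True unfolding K_def by auto
    define k where "k = Max K"
    have kK: "k \<in> K" using fK k_def by simp
    have above: "\<forall>i. k < i \<and> i < d \<longrightarrow> a i = b i"
      using fK k_def K_def Max_ge by (metis (mono_tags, lifting) mem_Collect_eq not_le)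
    have "k < d" "a k \<noteq> b k" using kK K_def by auto
    then have "prof_less d p q \<or> prof_less d q p"
      using above pq by (cases "even k") (auto simp: linorder_neq_iff intro!: exI[of _ k])
    then show ?thesis by (auto simp: prof_le_def)
  qed
qed (auto simp: prof_le_def)

definition is_max where "is_max d S x \<longleftrightarrow> x \<in> S \<and> (\<forall>y\<in>S. prof_le d y x)"
definition is_min where "is_min d S x \<longleftrightarrow> x \<in> S \<and> (\<forall>y\<in>S. prof_le d x y)"

lemma pmax_eq: "is_max d S x \<Longrightarrow> pmax d S = x"
  unfolding pmax_def is_max_def by (rule the_equality) (auto intro: prof_le_antisym)
lemma pmin_eq: "is_min d S x \<Longrightarrow> pmin d S = x"
  unfolding pmin_def is_min_def by (rule the_equality) (auto intro: prof_le_antisym)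

lemma finite_has_max:
  assumes "finite S" "S \<noteq> {}" "\<forall>p\<in>S. good d p" shows "\<exists>x. is_max d S x"
  using assms
proof (induction S rule: finite_ne_induct)
  case (singleton x) then show ?case by (auto simp: is_max_def prof_le_refl)
next
  case (insert x F)
  then obtain m where m: "is_max d F m" by auto
  have "good d m" using m insert unfolding is_max_def by auto
  then have "prof_le d x m \<or> prof_le d m x" using insert prof_le_total by auto
  then show ?case using m unfolding is_max_def
    by (metis insert_iff prof_le_refl prof_le_trans)
qed

lemma finite_has_min:
  assumes "finite S" "S \<noteq> {}" "\<forall>p\<in>S. good d p" shows "\<exists>x. is_min d S x"
  using assms
proof (induction S rule: finite_ne_induct)
  case (singleton x) then show ?case by (auto simp: is_min_def prof_le_refl)
next
  case (insert x F)
  then obtain m where m: "is_min d F m" by auto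
  have "good d m" using m insert unfolding is_min_def by auto
  then have "prof_le d x m \<or> prof_le d m x" using insert prof_le_total by auto
  then show ?case using m unfolding is_min_def
    by (metis insert_iff prof_le_refl prof_le_trans)
qed



definition fplay :: "('v option \<times> 'v option) set \<Rightarrow> 'v option \<Rightarrow> 'v option list \<Rightarrow> bool" where
  "fplay F s xs \<longleftrightarrow> xs \<noteq> [] \<and> hd xs = s \<and> successively (\<lambda>x y. (x, y) \<in> F) xs \<and> (\<nexists>t. (last xs, t) \<in> F)"

definition cnt :: "('v \<Rightarrow> nat) \<Rightarrow> 'v option list \<Rightarrow> nat \<Rightarrow> int" where
  "cnt c xs i = int (length (filter (\<lambda>x. x \<noteq> None \<and> c (the x) = i) xs))"

lemma play_profs_alt: "play_profs c F s =
   {Fin (cnt c xs) | xs. fplay F s xs} \<union> {inf_prof c \<pi> | \<pi>. \<pi> 0 = s \<and> (\<forall>n. (\<pi> n, \<pi> (Suc n)) \<in> F)}"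
  unfolding play_profs_def fplay_def path_prof_def cnt_def successively_conv_nth by auto

lemma cnt_append: "cnt c (xs @ ys) i = cnt c xs i + cnt c ys i"
  by (simp add: cnt_def)

lemma set_walk: "successively (\<lambda>x y. (x, y) \<in> F) xs \<Longrightarrow> xs \<noteq> [] \<Longrightarrow> hd xs \<in> W \<Longrightarrow> F \<subseteq> W \<times> W \<Longrightarrow> set xs \<subseteq> W"
  by (induction "\<lambda>x y. (x, y) \<in> F" xs rule: successively.induct) auto

lemma iter_comp: "xs \<noteq> [] \<Longrightarrow> f \<circ> xs\<^sup>\<omega> = (map f xs)\<^sup>\<omega>"
  by (rule ext) simp

lemma iter_edges:
  assumes "xs \<noteq> []" "successively P (xs @ [hd xs])"
  shows "P (xs\<^sup>\<omega> n) (xs\<^sup>\<omega> (Suc n))"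
proof -
  let ?L = "length xs" and ?i = "n mod length xs"
  have L: "?L > 0" using assms by simp
  have i: "?i < ?L" using L by simp
  have e: "P ((xs @ [hd xs]) ! ?i) ((xs @ [hd xs]) ! Suc ?i)"
    using successively_nth[OF assms(2)] i by simp
  show ?thesis
  proof (cases "Suc ?i < ?L")
    case True
    then have "Suc n mod ?L = Suc ?i" by (metis mod_Suc not_less_iff_gr_or_eq)
    then show ?thesis using e True i L by (simp add: nth_append)
  next
    case False
    then have "Suc ?i = ?L" using i by simp
    then have "Suc n mod ?L = 0" by (metis mod_Suc nat.simps(3))
    then show ?thesis using e \<open>Suc ?i = ?L\<close> i L by (simp add: nth_append hd_conv_nth)
  qed
qed

lemma lasso_edges:
  assumes "cyc \<noteq> []" "successively P (a @ cyc @ [hd cyc])"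
  shows "P ((a \<frown> cyc\<^sup>\<omega>) n) ((a \<frown> cyc\<^sup>\<omega>) (Suc n))"
proof -
  have sa: "successively P (a @ [hd cyc])" and sc: "successively P (cyc @ [hd cyc])"
    using assms by (auto simp: successively_append_iff hd_append)
  show ?thesis
  proof (cases "Suc n < length a")
    case True
    then show ?thesis using successively_nth[OF sa, of n] by (simp add: nth_append)
  next
    case False
    show ?thesis
    proof (cases "n < length a")
      case True
      then have "n = length a - 1" "a \<noteq> []" using False by auto
      then have "P (last a) (hd cyc)" using sa
        by (simp add: successively_append_iff)
      moreover have "cyc\<^sup>\<omega> 0 = hd cyc" using assms by (simp add: hd_conv_nth)
      ultimately show ?thesis using True False \<open>n = length a - 1\<close> \<open>a \<noteq> []\<close>
        by (simp add: last_conv_nth)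
    next
      case False
      then have "Suc n - length a = Suc (n - length a)" by simp
      then show ?thesis using False iter_edges[OF assms(1) sc, of "n - length a"] by simp
    qed
  qed
qed



lemma lasso_prof:
  assumes "cyc \<noteq> []"
  shows "inf_prof c (a \<frown> cyc\<^sup>\<omega>) = (if even (Max ((\<lambda>x. c (the x)) ` set cyc)) then PInf else NInf)"
proof -
  let ?f = "\<lambda>x. c (the x)"
  have e1: "?f \<circ> (a \<frown> cyc\<^sup>\<omega>) = map ?f a \<frown> (?f \<circ> cyc\<^sup>\<omega>)" by (rule comp_concat)
  have "{k. \<exists>\<^sub>\<infinity>n. c (the ((a \<frown> cyc\<^sup>\<omega>) n)) = k} = limit (map ?f a \<frown> (?f \<circ> cyc\<^sup>\<omega>))"
    unfolding limit_def by (simp add: conc_def)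
  also have "\<dots> = ?f ` set cyc" using assms by (simp add: iter_comp)
  finally show ?thesis by (simp add: inf_prof_def)
qed

lemma cnt_Nil[simp]: "cnt c [] i = 0" by (simp add: cnt_def)
lemma cnt_Cons[simp]: "cnt c (x # xs) i = (if x \<noteq> None \<and> c (the x) = i then 1 else 0) + cnt c xs i"
  by (simp add: cnt_def)
lemma cnt_nonneg: "cnt c xs i \<ge> 0" by (simp add: cnt_def)
lemma cnt_zero: "\<forall>x\<in>set xs. x \<noteq> None \<longrightarrow> c (the x) \<noteq> i \<Longrightarrow> cnt c xs i = 0"
  by (induction xs) auto
lemma cnt_pos: "x \<in> set xs \<Longrightarrow> x \<noteq> None \<Longrightarrow> c (the x) = i \<Longrightarrow> cnt c xs i > 0"
  by (induction xs) (auto, smt (verit) cnt_nonneg)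

lemma succ_join: "successively P (xs @ [v]) \<Longrightarrow> successively P (v # ys) \<Longrightarrow> successively P (xs @ v # ys)"
  by (auto simp: successively_append_iff)

context
  fixes W :: "'v option set" and F and s and c :: "'v \<Rightarrow> nat" and d
  assumes finW: "finite W" and FW: "F \<subseteq> W \<times> W" and sW: "s \<in> W"
    and col: "\<forall>x\<in>W. x \<noteq> None \<longrightarrow> c (the x) < d"
    and noN: "\<forall>t. (None, t) \<notin> F"
begin

lemma fplay_set: "fplay F s xs \<Longrightarrow> set xs \<subseteq> W"
  using set_walk[of F xs W] FW sW unfolding fplay_def by auto

lemma good_cnt: "fplay F s xs \<Longrightarrow> good d (Fin (cnt c xs))"
proof -
  assume pl: "fplay F s xs"
  have "\<forall>i\<ge>d. cnt c xs i = 0"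
  proof (intro allI impI cnt_zero ballI)
    fix i x assume "d \<le> i" "x \<in> set xs" "x \<noteq> None"
    then have "c (the x) < d" using fplay_set[OF pl] col by blast
    then show "c (the x) \<noteq> i" using \<open>d \<le> i\<close> by simp
  qed
  then show ?thesis unfolding good_def by simp
qed

lemma cut_step:
  assumes pl: "fplay F s xs" and nd: "\<not> distinct xs"
    and noP: "PInf \<notin> play_profs c F s"
  shows "\<exists>ys. fplay F s ys \<and> length ys < length xs \<and> prof_le d (Fin (cnt c xs)) (Fin (cnt c ys))"
proof -
  obtain a v b e where xs: "xs = a @ [v] @ b @ [v] @ e" using not_distinct_decomp[OF nd] by blast
  let ?P = "\<lambda>x y. (x, y) \<in> F"
  let ?cyc = "v # b"
  let ?ys = "a @ [v] @ e"
  have sxs: "successively ?P xs" and hxs: "hd xs = s" and lxs: "\<nexists>t. (last xs, t) \<in> F"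
    using pl unfolding fplay_def by auto
  have xs1: "xs = (a @ ?cyc @ [hd ?cyc]) @ e" using xs by simp
  have s1: "successively ?P (a @ ?cyc @ [hd ?cyc])" using sxs unfolding xs1
    by (simp only: successively_append_iff)
  have xs3: "xs = (a @ [v]) @ (b @ [v] @ e)" "xs = (a @ [v] @ b) @ (v # e)" using xs by simp_all
  have sav: "successively ?P (a @ [v])" using sxs unfolding xs3(1) by (simp only: successively_append_iff)
  have sve: "successively ?P (v # e)" using sxs unfolding xs3(2) by (simp only: successively_append_iff)
  have sys: "successively ?P ?ys" using succ_join[OF sav sve] by simp
  have pys: "fplay F s ?ys"
    using sys hxs lxs unfolding xs fplay_def
    by (cases a; cases e) auto
  have len: "length ?ys < length xs" using xs by simp
  have xs2: "xs = a @ (?cyc @ [v]) @ e" using xs by simp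
  have scyc: "successively ?P (?cyc @ [v])" using sxs unfolding xs2
    by (simp only: successively_append_iff)
  have cycW: "\<forall>x\<in>set ?cyc. x \<noteq> None"
  proof
    fix x assume "x \<in> set ?cyc"
    then obtain i where i: "i < length ?cyc" "?cyc ! i = x" by (metis in_set_conv_nth)
    have "?P ((?cyc @ [v]) ! i) ((?cyc @ [v]) ! Suc i)"
      using successively_nth[OF scyc, of i] i by simp
    moreover have "(?cyc @ [v]) ! i = x" using i by (simp only: nth_append) simp
    ultimately show "x \<noteq> None" using noN by (metis)
  qed
  have xsW: "set xs \<subseteq> W" using fplay_set pl by blast
  let ?f = "\<lambda>x. c (the x)"
  define M where "M = Max (?f ` set ?cyc)"
  show ?thesis
  proof (cases "even M")
    case True
    define \<pi> where "\<pi> = a \<frown> ?cyc\<^sup>\<omega>"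
    have "\<pi> 0 = s" using hxs unfolding \<pi>_def xs by (cases a) auto
    moreover have "\<forall>n. (\<pi> n, \<pi> (Suc n)) \<in> F"
      using lasso_edges[OF _ s1] unfolding \<pi>_def by blast
    ultimately have "inf_prof c \<pi> \<in> play_profs c F s" unfolding play_profs_def by blast
    moreover have "inf_prof c \<pi> = PInf" unfolding \<pi>_def using lasso_prof[of ?cyc c a] True M_def by simp
    ultimately show ?thesis using noP by simp
  next
    case False
    have MA: "M \<in> ?f ` set ?cyc" unfolding M_def by (rule Max_in) auto
    have Mge: "\<forall>x\<in>set ?cyc. ?f x \<le> M" unfolding M_def by auto
    have Md: "M < d" using MA col xsW cycW unfolding xs by auto
    have ceq: "\<forall>i. cnt c xs i = cnt c ?ys i + cnt c ?cyc i" unfolding xs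
      by (simp add: cnt_append)
    have cz: "\<forall>i>M. cnt c ?cyc i = 0"
      using Mge by (auto intro!: cnt_zero)
    obtain x where x: "x \<in> set ?cyc" "M = ?f x" using MA by blast
    have xn: "x \<noteq> None" using x cycW by blast
    have cpos: "cnt c ?cyc M > 0" unfolding x(2) by (rule cnt_pos[OF x(1) xn refl])
    have a1: "\<forall>i. M < i \<and> i < d \<longrightarrow> cnt c xs i = cnt c ?ys i" using ceq cz by simp
    have a2: "odd M \<and> cnt c xs M > cnt c ?ys M" using ceq cpos False by simp
    have "prof_less d (Fin (cnt c xs)) (Fin (cnt c ?ys))"
      using Md a1 a2 by (simp only: prof_less.simps) blast
    then have "prof_le d (Fin (cnt c xs)) (Fin (cnt c ?ys))" unfolding prof_le_def by blast
    then show ?thesis using pys len by blast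
  qed
qed


lemma reduce_distinct:
  assumes noP: "PInf \<notin> play_profs c F s"
  shows "fplay F s xs \<Longrightarrow> \<exists>ys. fplay F s ys \<and> distinct ys \<and> prof_le d (Fin (cnt c xs)) (Fin (cnt c ys))"
proof (induction "length xs" arbitrary: xs rule: less_induct)
  case less
  show ?case
  proof (cases "distinct xs")
    case True
    then show ?thesis using less.prems prof_le_refl by blast
  next
    case False
    obtain ys1 where y1: "fplay F s ys1" "length ys1 < length xs" "prof_le d (Fin (cnt c xs)) (Fin (cnt c ys1))"
      using cut_step[OF less.prems False noP] by blast
    obtain ys where "fplay F s ys" "distinct ys" "prof_le d (Fin (cnt c ys1)) (Fin (cnt c ys))"
      using less.hyps[OF y1(2) y1(1)] by blast
    then show ?thesis using y1(3) prof_le_trans by blast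
  qed
qed

lemma inf_prof_cases: "inf_prof c' \<pi> = PInf \<or> inf_prof c' \<pi> = NInf"
  by (simp add: inf_prof_def)

lemma le_PInf: "prof_le d y PInf"
  by (cases y) (auto simp: prof_le_def)

lemma NInf_le_Fin: "prof_le d NInf (Fin a)"
  by (simp add: prof_le_def)

lemma infinite_walk:
  assumes nofin: "\<nexists>xs. fplay F s xs"
  shows "\<exists>\<pi>. \<pi> 0 = s \<and> (\<forall>n. (\<pi> n, \<pi> (Suc n)) \<in> F)"
proof -
  let ?P = "\<lambda>x y. (x, y) \<in> F"
  define nx where "nx x = (SOME t. (x, t) \<in> F)" for x
  define \<pi> where "\<pi> n = (nx ^^ n) s" for n
  have step: "(x, nx x) \<in> F" if "\<exists>t. (x, t) \<in> F" for x
    using that unfolding nx_def by (rule someI_ex)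
  have walk: "\<exists>xs. xs \<noteq> [] \<and> hd xs = s \<and> successively ?P xs \<and> last xs = \<pi> n" for n
  proof (induction n)
    case 0
    show ?case by (rule exI[of _ "[s]"]) (simp add: \<pi>_def)
  next
    case (Suc n)
    then obtain xs where xs: "xs \<noteq> []" "hd xs = s" "successively ?P xs" "last xs = \<pi> n" by blast
    have "fplay F s xs \<longleftrightarrow> (\<nexists>t. (last xs, t) \<in> F)" using xs unfolding fplay_def by simp
    then have "\<exists>t. (last xs, t) \<in> F" using nofin by blast
    then have "\<exists>t. (\<pi> n, t) \<in> F" using xs(4) by simp
    then have e: "(\<pi> n, \<pi> (Suc n)) \<in> F" using step unfolding \<pi>_def by simp
    show ?case
      by (rule exI[of _ "xs @ [\<pi> (Suc n)]"]) (use xs e in \<open>auto simp: successively_append_iff\<close>)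
  qed
  have "(\<pi> n, \<pi> (Suc n)) \<in> F" for n
  proof -
    obtain xs where xs: "xs \<noteq> []" "hd xs = s" "successively ?P xs" "last xs = \<pi> n" using walk by blast
    have "fplay F s xs \<longleftrightarrow> (\<nexists>t. (last xs, t) \<in> F)" using xs unfolding fplay_def by simp
    then have "\<exists>t. (last xs, t) \<in> F" using nofin by blast
    then have "\<exists>t. (\<pi> n, t) \<in> F" using xs(4) by simp
    then show ?thesis using step unfolding \<pi>_def by simp
  qed
  moreover have "\<pi> 0 = s" by (simp add: \<pi>_def)
  ultimately show ?thesis by blast
qed

lemma has_max: "\<exists>m. is_max d (play_profs c F s) m"
proof (cases "PInf \<in> play_profs c F s")
  case True
  then show ?thesis using le_PInf unfolding is_max_def by blast
next
  case False
  note red = reduce_distinct[OF False]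
  have infN: "inf_prof c \<pi> = NInf" if "\<pi> 0 = s" "\<forall>n. (\<pi> n, \<pi> (Suc n)) \<in> F" for \<pi>
  proof -
    have "inf_prof c \<pi> \<in> play_profs c F s" using that unfolding play_profs_def by blast
    then show ?thesis using False inf_prof_cases[of c \<pi>] by auto
  qed
  show ?thesis
  proof (cases "\<exists>xs. fplay F s xs")
    case True
    define D where "D = (\<lambda>ys. Fin (cnt c ys)) ` {ys. fplay F s ys \<and> distinct ys}"
    have sub: "{ys. fplay F s ys \<and> distinct ys} \<subseteq> {ys. set ys \<subseteq> W \<and> length ys \<le> card W}"
    proof
      fix ys assume "ys \<in> {ys. fplay F s ys \<and> distinct ys}"
      then have "set ys \<subseteq> W" "distinct ys" using fplay_set by auto
      moreover then have "length ys \<le> card W"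
        using distinct_card[of ys] card_mono[OF finW] by metis
      ultimately show "ys \<in> {ys. set ys \<subseteq> W \<and> length ys \<le> card W}" by simp
    qed
    have finD: "finite D" unfolding D_def
      using finite_subset[OF sub finite_lists_length_le[OF finW]] by simp
    have neD: "D \<noteq> {}" using True red unfolding D_def by blast
    have gD: "\<forall>p\<in>D. good d p" unfolding D_def using good_cnt by blast
    obtain m where m: "is_max d D m" using finite_has_max[OF finD neD gD] by blast
    have mD: "m \<in> D" using m unfolding is_max_def by blast
    then obtain a where ma: "m = Fin a" unfolding D_def by blast
    have DS: "D \<subseteq> play_profs c F s" unfolding D_def play_profs_alt by blast
    have "\<forall>y\<in>play_profs c F s. prof_le d y m"
    proof
      fix y assume "y \<in> play_profs c F s"
      then consider (f) xs where "y = Fin (cnt c xs)" "fplay F s xs"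
        | (i) \<pi> where "y = inf_prof c \<pi>" "\<pi> 0 = s" "\<forall>n. (\<pi> n, \<pi> (Suc n)) \<in> F"
        unfolding play_profs_alt by blast
      then show "prof_le d y m"
      proof cases
        case f
        then obtain ys where ys: "fplay F s ys" "distinct ys" "prof_le d y (Fin (cnt c ys))"
          using red by blast
        have "Fin (cnt c ys) \<in> D" using ys unfolding D_def by blast
        then have "prof_le d (Fin (cnt c ys)) m" using m unfolding is_max_def by blast
        then show ?thesis using ys(3) prof_le_trans by blast
      next
        case i
        then show ?thesis using infN ma NInf_le_Fin by simp
      qed
    qed
    then show ?thesis using mD DS unfolding is_max_def by blast
  next
    case False
    obtain \<pi> where pi: "\<pi> 0 = s" "\<forall>n. (\<pi> n, \<pi> (Suc n)) \<in> F" using infinite_walk[OF False] by blast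
    have "NInf \<in> play_profs c F s" using infN[OF pi] pi unfolding play_profs_def by force
    moreover have "\<forall>y\<in>play_profs c F s. y = NInf"
      using False infN unfolding play_profs_alt by blast
    ultimately show ?thesis unfolding is_max_def using prof_le_refl by metis
  qed
qed

end


lemma good_play:
  assumes "finite W" "F \<subseteq> W \<times> W" "s \<in> W" "\<forall>x\<in>W. x \<noteq> None \<longrightarrow> c (the x) < d" "\<forall>t. (None, t) \<notin> F"
  shows "\<forall>p\<in>play_profs c F s. good d p"
proof
  fix p assume "p \<in> play_profs c F s"
  then consider (f) xs where "p = Fin (cnt c xs)" "fplay F s xs" | (i) \<pi> where "p = inf_prof c \<pi>"
    unfolding play_profs_alt by blast
  then show "good d p"
  proof cases
    case f then show ?thesis using good_cnt[OF assms] by blast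
  next
    case i then show ?thesis by (simp add: inf_prof_def good_def)
  qed
qed

theorem mainTheorem2:
  fixes V :: "'v set" and E :: "('v \<times> 'v) set" and V0 :: "'v set"
    and c :: "'v \<Rightarrow> nat" and d :: nat
    and \<sigma> \<sigma>' :: "('v option \<times> 'v option) set"
  assumes "arena V E V0 c d"
    and "strategy0 E V0 \<sigma>" and "reasonable V E V0 c \<sigma>"
    and "strategy0 E V0 \<sigma>'" and "\<sigma>' \<subseteq> improvements V E V0 c d \<sigma>"
  shows "\<forall>s\<in>V. prof_le d (val V E V0 c d \<sigma>' (Some s))
                       (val V E V0 c d (improvements V E V0 c d \<sigma>) (Some s))"
proof
  fix s assume sV: "s \<in> V"
  define I where "I = improvements V E V0 c d \<sigma>"
  define W where "W = insert None (Some ` V)"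
  have ar: "finite V" "E \<subseteq> V \<times> V" "\<forall>v\<in>V. \<exists>w. (v, w) \<in> E" "V0 \<subseteq> V" "\<forall>v\<in>V. c v < d"
    using assms(1) unfolding arena_def by auto
  have finW: "finite W" using ar unfolding W_def by simp
  have sW: "Some s \<in> W" using sV unfolding W_def by simp
  have col: "\<forall>x\<in>W. x \<noteq> None \<longrightarrow> c (the x) < d" using ar unfolding W_def by auto
  have IE0: "I \<subseteq> E0 E V0" unfolding I_def improvements_def by auto
  have s'I: "\<sigma>' \<subseteq> I" using assms(5) unfolding I_def .
  have E0W: "E0 E V0 \<subseteq> W \<times> W" using ar unfolding E0_def Ebot_def W_def by auto
  have E1W: "E1 V E V0 \<subseteq> W \<times> W" using ar unfolding E1_def W_def by auto
  have E0N: "\<forall>t. (None, t) \<notin> E0 E V0" unfolding E0_def by auto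
  have E1N: "\<forall>t. (None, t) \<notin> E1 V E V0" unfolding E1_def by auto
  define T where "T = {\<tau>. strategy1 V E V0 \<tau>}"
  define pm1 where "pm1 \<tau> = pmax d (play_profs c (\<sigma>' \<union> \<tau>) (Some s))" for \<tau>
  define pm2 where "pm2 \<tau> = pmax d (play_profs c (I \<union> \<tau>) (Some s))" for \<tau>
  have key: "prof_le d (pm1 \<tau>) (pm2 \<tau>) \<and> good d (pm1 \<tau>) \<and> good d (pm2 \<tau>)" if "\<tau> \<in> T" for \<tau>
  proof -
    have \<tau>E1: "\<tau> \<subseteq> E1 V E V0" and \<tau>succ: "\<forall>u\<in>V - V0. \<exists>t. (Some u, t) \<in> \<tau>"
      using that unfolding T_def strategy1_def by auto
    have F2W: "I \<union> \<tau> \<subseteq> W \<times> W" using IE0 E0W \<tau>E1 E1W by blast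
    have F1W: "\<sigma>' \<union> \<tau> \<subseteq> W \<times> W" using s'I F2W by blast
    have F2N: "\<forall>t. (None, t) \<notin> I \<union> \<tau>" using IE0 E0N \<tau>E1 E1N by blast
    have F1N: "\<forall>t. (None, t) \<notin> \<sigma>' \<union> \<tau>" using s'I F2N by blast
    obtain m2 where m2: "is_max d (play_profs c (I \<union> \<tau>) (Some s)) m2"
      using has_max[OF finW F2W sW col F2N] by blast
    obtain m1 where m1: "is_max d (play_profs c (\<sigma>' \<union> \<tau>) (Some s)) m1"
      using has_max[OF finW F1W sW col F1N] by blast
    have sub: "play_profs c (\<sigma>' \<union> \<tau>) (Some s) \<subseteq> play_profs c (I \<union> \<tau>) (Some s)"
    proof -
      have "fplay (I \<union> \<tau>) (Some s) xs" if fp: "fplay (\<sigma>' \<union> \<tau>) (Some s) xs" for xs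
      proof -
        have sw: "successively (\<lambda>x y. (x, y) \<in> \<sigma>' \<union> \<tau>) xs" and ne: "xs \<noteq> []" and hd: "hd xs = Some s"
          and nl: "\<nexists>t. (last xs, t) \<in> \<sigma>' \<union> \<tau>"
          using fp unfolding fplay_def by auto
        have sw2: "successively (\<lambda>x y. (x, y) \<in> I \<union> \<tau>) xs"
          by (rule successively_mono[OF sw]) (use s'I in blast)
        have "set xs \<subseteq> W" using set_walk[OF sw ne _ F1W] hd sW by simp
        then have lW: "last xs \<in> W" using ne by auto
        have "last xs = None"
        proof (rule ccontr)
          assume "last xs \<noteq> None"
          then obtain u where u: "last xs = Some u" "u \<in> V" using lW unfolding W_def by auto
          show False
          proof (cases "u \<in> V0")
            case True
            then obtain t where "(Some u, t) \<in> \<sigma>'" using assms(4) unfolding strategy0_def by blast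
            then show False using nl u by auto
          next
            case False
            then obtain t where "(Some u, t) \<in> \<tau>" using \<tau>succ u by blast
            then show False using nl u by auto
          qed
        qed
        then show ?thesis using sw2 ne hd F2N unfolding fplay_def by simp
      qed
      moreover have "\<forall>n. (\<pi> n, \<pi> (Suc n)) \<in> I \<union> \<tau>" if "\<forall>n. (\<pi> n, \<pi> (Suc n)) \<in> \<sigma>' \<union> \<tau>" for \<pi>
        using that s'I by auto
      ultimately show ?thesis unfolding play_profs_alt
        by (intro Un_mono; intro subsetI; elim CollectE exE conjE; simp) (metis, metis)
    qed
    have "prof_le d m1 m2" using m1 m2 sub unfolding is_max_def by blast
    moreover have "pm1 \<tau> = m1" "pm2 \<tau> = m2" unfolding pm1_def pm2_def using m1 m2 pmax_eq by auto
    moreover have "good d m1" using m1 good_play[OF finW F1W sW col F1N] unfolding is_max_def by blast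
    moreover have "good d m2" using m2 good_play[OF finW F2W sW col F2N] unfolding is_max_def by blast
    ultimately show ?thesis by simp
  qed
  have finE: "finite E" using ar finite_subset[of E "V \<times> V"] by blast
  have "E1 V E V0 \<subseteq> (\<lambda>(u, v). (Some u, Some v)) ` E" unfolding E1_def by auto
  then have finE1: "finite (E1 V E V0)" using finE finite_subset by blast
  have finT: "finite T" unfolding T_def strategy1_def
    using finite_subset[OF _ iffD2[OF finite_Pow_iff finE1]] by (metis (no_types, lifting) Collect_mono PowI mem_Collect_eq subsetI)
  define \<tau>0 where "\<tau>0 = {(Some u, Some (SOME w. (u, w) \<in> E)) | u. u \<in> V - V0}"
  have sel: "\<forall>u\<in>V. (u, SOME w. (u, w) \<in> E) \<in> E"
    using ar(3) by (metis someI_ex)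
  have "\<tau>0 \<in> T" unfolding T_def strategy1_def \<tau>0_def E1_def
    using sel by auto
  then have neT: "T \<noteq> {}" by blast
  have e1: "{pmax d (play_profs c (\<sigma>' \<union> \<tau>) (Some s)) | \<tau>. strategy1 V E V0 \<tau>} = pm1 ` T"
    unfolding pm1_def T_def by blast
  have e2: "{pmax d (play_profs c (I \<union> \<tau>) (Some s)) | \<tau>. strategy1 V E V0 \<tau>} = pm2 ` T"
    unfolding pm2_def T_def by blast
  obtain n1 where n1: "is_min d (pm1 ` T) n1" using finite_has_min[of "pm1 ` T" d] finT neT key by blast
  obtain n2 where n2: "is_min d (pm2 ` T) n2" using finite_has_min[of "pm2 ` T" d] finT neT key by blast
  obtain \<tau>2 where t2: "\<tau>2 \<in> T" "n2 = pm2 \<tau>2" using n2 unfolding is_min_def by blast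
  have "prof_le d n1 (pm1 \<tau>2)" using n1 t2 unfolding is_min_def by blast
  then have le: "prof_le d n1 n2" using key[OF t2(1)] t2(2) prof_le_trans by blast
  have "val V E V0 c d \<sigma>' (Some s) = n1" unfolding val_def using e1 n1 pmin_eq by simp
  moreover have "val V E V0 c d I (Some s) = n2" unfolding val_def using e2 n2 pmin_eq by simp
  ultimately show "prof_le d (val V E V0 c d \<sigma>' (Some s)) (val V E V0 c d (improvements V E V0 c d \<sigma>) (Some s))"
    using le unfolding I_def by simp
qed


end
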